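(* Let $T=(T_a,T_b)$ be a rooted binary tree on $n$ leaves with minimal Colless index, where $T_a,T_b$ have $n_a\geq n_b$ leaves. Let $T_n^{gfb}=(T_a^{gfb},T_b^{gfb})$ with $n_a^{gfb}\geq n_b^{gfb}$ leaves and $T_n^{mb}=(T_a^{mb},T_b^{mb})$ with $n_a^{mb}\geq n_b^{mb}$ leaves. Then $$n_a^{gfb}\geq n_a\geq n_a^{mb}\quad\text{and}\quad n_b^{gfb}\leq n_b\leq n_b^{mb}.$$
   Context: A rooted binary tree with $n\geq 2$ leaves is a rooted tree whose root has degree 2 and all other internal nodes have degree 3; for $n=1$ it is a single node. Trees are up to isomorphism. $T=(T_a,T_b)$ denotes the decomposition into the subtrees rooted at the children of the root. For an internal node $v$ with children $v_1,v_2$, let $\kappa(v_i)$ be the number of leaves descending from $v_i$ ($1$ if a leaf) and $bal(v)=|\kappa(v_1)-\kappa(v_2)|$. The Colless index is $\mathcal{C}(T)=\sum_v bal(v)$ over internal nodes; minimal means minimal among rooted binary trees with $n$ leaves. $T_n^{mb}$ is the unique tree with $n$ leaves having $bal(v)\leq1$ at every internal node (maximally balanced tree). The GFB tree $T_n^{gfb}$ is the output of: start with $n$ single-node trees; while more than one tree remains, remove a tree $u$ of minimal size (number of leaves), then remove a tree $v$ of minimal size among the remaining ones, and insert the tree with a new root whose children are the roots of $u$ and $v$; output the remaining tree. *)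

theory Defs
  imports Main "HOL-Library.Multiset"
begin

text \<open>Rooted binary trees as plane trees; isomorphism (swapping children) does not
  affect leaf counts or the Colless index, so all notions below are isomorphism-invariant.\<close>
datatype btree = Leaf | Node btree btree

fun leaves :: "btree \<Rightarrow> nat" where
  "leaves Leaf = 1"
| "leaves (Node l r) = leaves l + leaves r"

definition bal_of :: "btree \<Rightarrow> btree \<Rightarrow> nat" where
  "bal_of l r = nat \<bar>int (leaves l) - int (leaves r)\<bar>"

fun colless :: "btree \<Rightarrow> nat" where
  "colless Leaf = 0"
| "colless (Node l r) = bal_of l r + colless l + colless r"

definition colless_minimal :: "btree \<Rightarrow> bool" where
  "colless_minimal T \<longleftrightarrow> (\<forall>T'. leaves T' = leaves T \<longrightarrow> colless T \<le> colless T')"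

fun max_balanced :: "btree \<Rightarrow> bool" where
  "max_balanced Leaf = True"
| "max_balanced (Node l r) = (bal_of l r \<le> 1 \<and> max_balanced l \<and> max_balanced r)"

inductive gfb_step :: "btree multiset \<Rightarrow> btree multiset \<Rightarrow> bool" where
  "u \<in># M \<Longrightarrow> (\<forall>w\<in>#M. leaves u \<le> leaves w) \<Longrightarrow>
   v \<in># M - {#u#} \<Longrightarrow> (\<forall>w\<in># M - {#u#}. leaves v \<le> leaves w) \<Longrightarrow>
   gfb_step M (M - {#u#} - {#v#} + {#Node u v#})"

definition gfb_tree :: "nat \<Rightarrow> btree \<Rightarrow> bool" where
  "gfb_tree n T \<longleftrightarrow> gfb_step\<^sup>*\<^sup>* (replicate_mset n Leaf) {#T#}"

end

theory Submission
  imports Defs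
begin

section \<open>Minimal Colless values\<close>

lemma half_lt: "odd n \<Longrightarrow> \<not> n \<le> Suc 0 \<Longrightarrow> Suc (n div 2) < n"
  by presburger

function cmb :: "nat \<Rightarrow> nat" where
  "cmb n = (if n \<le> 1 then 0 else if even n then 2 * cmb (n div 2)
            else cmb (n div 2) + cmb (n div 2 + 1) + 1)"
  by auto
termination by (relation "measure id") (auto simp: half_lt)

declare cmb.simps[simp del]

lemma cmb_0[simp]: "cmb 0 = 0" and cmb_1[simp]: "cmb 1 = 0" "cmb (Suc 0) = 0"
  and cmb_2[simp]: "cmb 2 = 0" "cmb (Suc (Suc 0)) = 0"
  by (simp_all add: cmb.simps)

lemma cmb_even: "cmb (2 * m) = 2 * cmb m"
  by (cases "m = 0") (simp_all add: cmb.simps[of "2*m"])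

lemma cmb_even': "cmb (Suc (Suc (2 * m))) = 2 * cmb (Suc m)"
  using cmb_even[of "Suc m"] by simp

lemma cmb_odd: "m \<ge> 1 \<Longrightarrow> cmb (2 * m + 1) = cmb m + cmb (m + 1) + 1"
  by (subst cmb.simps) simp

lemma cmb_odd': "m \<ge> 1 \<Longrightarrow> cmb (Suc (2 * m)) = cmb m + cmb (Suc m) + 1"
  using cmb_odd by simp

lemma halves: obtains k where "(a::nat) = 2 * k" | k where "a = 2 * k + 1"
proof -
  show ?thesis
  proof (cases "a mod 2 = 0")
    case True
    then have "a = 2*(a div 2)" using div_mult_mod_eq[of a 2] by linarith
    then show ?thesis using that(1) by blast
  next
    case False
    then have "a mod 2 = 1" by simp
    then have "a = 2*(a div 2) + 1" using div_mult_mod_eq[of a 2] by linarith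
    then show ?thesis using that(2) by blast
  qed
qed

function g :: "nat \<Rightarrow> nat" where
  "g n = (if n \<le> 1 then 0 else if n \<le> 3 then 1 else if even n then 2 * g (n div 2)
            else g (n div 2) + g (n div 2 + 1))"
  by auto
termination by (relation "measure id") (auto simp: half_lt)

declare g.simps[simp del]

lemma g_small[simp]: "g 0 = 0" "g 1 = 0" "g 2 = 1" "g 3 = 1" "g (Suc 0) = 0" "g (Suc (Suc 0)) = 1" "g (Suc (Suc (Suc 0))) = 1"
  by (simp_all add: g.simps)

lemma g_even: "m \<ge> 2 \<Longrightarrow> g (2 * m) = 2 * g m"
  by (subst g.simps) simp

lemma g_even': "m \<ge> 1 \<Longrightarrow> g (Suc (Suc (2 * m))) = 2 * g (Suc m)"
  using g_even[of "Suc m"] by simp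

lemma g_odd: "m \<ge> 2 \<Longrightarrow> g (2 * m + 1) = g m + g (m + 1)"
  by (subst g.simps) simp

lemma g_odd': "m \<ge> 2 \<Longrightarrow> g (Suc (2 * m)) = g m + g (Suc m)"
  using g_odd by simp

lemma g_le: "m \<ge> 1 \<Longrightarrow> g m + 1 \<le> m"
proof (induction m rule: less_induct)
  case (less m)
  show ?case
  proof (cases "m \<le> 3")
    case True
    with less.prems have "m = 1 \<or> m = 2 \<or> m = 3" by auto
    then show ?thesis by auto
  next
    case False
    obtain k where k: "m = 2 * k \<or> m = 2 * k + 1" by (metis halves)
    then show ?thesis
    proof
      assume m: "m = 2 * k"
      with False have "k \<ge> 2" by auto
      with less.IH[of k] m show ?thesis by (simp add: g_even)
    next
      assume m: "m = 2 * k + 1"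
      with False have "k \<ge> 2" by auto
      with less.IH[of k] less.IH[of "k+1"] m show ?thesis by (simp add: g_odd g_odd')
    qed
  qed
qed

lemma Q1: "a \<ge> 1 \<Longrightarrow> cmb (a + 1) + 1 \<le> cmb a + a"
proof (induction a rule: less_induct)
  case (less a)
  show ?case
  proof (cases "a = 1")
    case True
    then show ?thesis by (simp add: cmb_even[of 1, simplified])
  next
    case False
    obtain k where k: "a = 2 * k \<or> a = 2 * k + 1" by (metis halves)
    then show ?thesis
    proof
      assume m: "a = 2 * k"
      with False less.prems have "k \<ge> 1" by auto
      with less.IH[of k] m show ?thesis by (simp add: cmb_even cmb_even' cmb_odd cmb_odd')
    next
      assume m: "a = 2 * k + 1"
      with False have "k \<ge> 1" by auto
      moreover have "2 * k + 1 + 1 = 2 * (k + 1)" by simp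
      ultimately show ?thesis using less.IH[of k] m by (simp add: cmb_even cmb_even' cmb_odd cmb_odd')
    qed
  qed
qed

lemma P1: "a \<ge> 1 \<Longrightarrow> cmb (a + 1) + g (a + 1) \<le> cmb a + a"
proof (induction a rule: less_induct)
  case (less a)
  show ?case
  proof (cases "a = 1")
    case True
    then show ?thesis by (simp add: cmb_even[of 1, simplified])
  next
    case False
    obtain k where k: "a = 2 * k \<or> a = 2 * k + 1" by (metis halves)
    then show ?thesis
    proof
      assume m: "a = 2 * k"
      with False less.prems have k1: "k \<ge> 1" by auto
      have IH: "cmb (k + 1) + g (k + 1) \<le> cmb k + k" using less.IH[of k] m k1 by simp
      have "1 + g (2 * k + 1) \<le> g (k + 1) + k"
      proof (cases "k = 1")
        case True then show ?thesis by simp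
      next
        case False
        then have "k \<ge> 2" using k1 by simp
        then show ?thesis using g_le[of k] by (simp add: g_odd g_odd')
      qed
      then show ?thesis using IH m k1 by (simp add: cmb_even cmb_even' cmb_odd cmb_odd')
    next
      assume m: "a = 2 * k + 1"
      with False have k1: "k \<ge> 1" by auto
      have e: "2 * k + 1 + 1 = 2 * (k + 1)" by simp
      have IH: "cmb (k + 1) + g (k + 1) \<le> cmb k + k" using less.IH[of k] m k1 by simp
      have "g (k + 1) + 1 \<le> k + 1" using g_le[of "k+1"] by simp
      then show ?thesis using IH m k1 e g_even[of "k+1"] by (simp add: cmb_even cmb_even' cmb_odd cmb_odd')
    qed
  qed
qed


lemma Q: "b \<le> a \<Longrightarrow> cmb (a + b) + b \<le> cmb a + cmb b + a"
proof (induction "a + b" arbitrary: a b rule: less_induct)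
  case less
  show ?case
  proof (cases "b \<le> 1")
    case True
    then consider "b = 0" | "b = 1" by linarith
    then show ?thesis
    proof cases
      case 1 then show ?thesis by simp
    next
      case 2 then show ?thesis using Q1[of a] less.prems by simp
    qed
  next
    case False
    obtain a' b' where ab: "a = 2*a' \<or> a = 2*a'+1" "b = 2*b' \<or> b = 2*b'+1"
      by (metis halves)
    have b1: "b' \<ge> 1" using ab(2) False by auto
    have a1: "a' \<ge> 1" using ab less.prems False by auto
    from ab show ?thesis
    proof (elim disjE)
      assume A: "a = 2*a'" and B: "b = 2*b'"
      have "b' \<le> a'" using A B less.prems by simp
      then have IH: "cmb (a' + b') + b' \<le> cmb a' + cmb b' + a'" using less.hyps[of a' b'] A B b1 by simp
      have e: "a + b = 2 * (a' + b')" using A B by simp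
      have c1: "cmb (a + b) = 2 * cmb (a' + b')" unfolding e by (rule cmb_even)
      have c2: "cmb a = 2 * cmb a'" unfolding A by (rule cmb_even)
      have c3: "cmb b = 2 * cmb b'" unfolding B by (rule cmb_even)
      show ?thesis using IH A B c1 c2 c3 by linarith
    next
      assume A: "a = 2*a'+1" and B: "b = 2*b'"
      have le: "b' \<le> a'" using A B less.prems by simp
      have IH1: "cmb (a' + b') + b' \<le> cmb a' + cmb b' + a'" using less.hyps[of a' b'] A B b1 le by simp
      have IH2: "cmb (a' + b' + 1) + b' \<le> cmb (a'+1) + cmb b' + (a'+1)" using less.hyps[of "a'+1" b'] A B b1 le by simp
      have e: "a + b = 2 * (a' + b') + 1" using A B by simp
      have c1: "cmb (a + b) = cmb (a'+b') + cmb (a'+b'+1) + 1" unfolding e by (rule cmb_odd) (use a1 in simp)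
      have c2: "cmb a = cmb a' + cmb (a'+1) + 1" unfolding A by (rule cmb_odd) (use a1 in simp)
      have c3: "cmb b = 2 * cmb b'" unfolding B by (rule cmb_even)
      show ?thesis using IH1 IH2 A B c1 c2 c3 by linarith
    next
      assume A: "a = 2*a'" and B: "b = 2*b'+1"
      have le: "b' + 1 \<le> a'" using A B less.prems by simp
      have IH1: "cmb (a' + b') + b' \<le> cmb a' + cmb b' + a'" using less.hyps[of a' b'] A B b1 le by simp
      have IH2: "cmb (a' + b' + 1) + (b'+1) \<le> cmb a' + cmb (b'+1) + a'" using less.hyps[of a' "b'+1"] A B b1 le by simp
      have e: "a + b = 2 * (a' + b') + 1" using A B by simp
      have c1: "cmb (a + b) = cmb (a'+b') + cmb (a'+b'+1) + 1" unfolding e by (rule cmb_odd) (use a1 in simp)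
      have c2: "cmb a = 2 * cmb a'" unfolding A by (rule cmb_even)
      have c3: "cmb b = cmb b' + cmb (b'+1) + 1" unfolding B by (rule cmb_odd) (use b1 in simp)
      show ?thesis using IH1 IH2 A B c1 c2 c3 by linarith
    next
      assume A: "a = 2*a'+1" and B: "b = 2*b'+1"
      have le: "b' \<le> a'" using A B less.prems by simp
      have e: "a + b = 2 * (a' + b' + 1)" using A B by simp
      have c1: "cmb (a + b) = 2 * cmb (a'+b'+1)" unfolding e by (rule cmb_even)
      have c2: "cmb a = cmb a' + cmb (a'+1) + 1" unfolding A by (rule cmb_odd) (use a1 in simp)
      have c3: "cmb b = cmb b' + cmb (b'+1) + 1" unfolding B by (rule cmb_odd) (use b1 in simp)
      have IH1: "cmb (a' + b' + 1) + b' \<le> cmb (a'+1) + cmb b' + (a'+1)" using less.hyps[of "a'+1" b'] A B b1 le by simp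
      show ?thesis
      proof (cases "a' = b'")
        case True
        then have "cmb a' = cmb b'" "cmb (a'+1) = cmb (b'+1)" by simp_all
        then show ?thesis using IH1 A B c1 c2 c3 True by linarith
      next
        case False
        with le have le': "b' + 1 \<le> a'" by simp
        have IH2: "cmb (a' + b' + 1) + (b'+1) \<le> cmb a' + cmb (b'+1) + a'" using less.hyps[of a' "b'+1"] A B b1 le' by simp
        show ?thesis using IH1 IH2 A B c1 c2 c3 by linarith
      qed
    qed
  qed
qed

lemma P: "b \<le> a \<Longrightarrow> cmb (a + b) + g (a + b) \<le> cmb a + cmb b + a"
proof (induction "a + b" arbitrary: a b rule: less_induct)
  case less
  show ?case
  proof (cases "b \<le> 1")
    case True
    then consider "b = 0" | "b = 1" by linarith
    then show ?thesis
    proof cases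
      case 1 then show ?thesis using g_le[of a] by (cases "a = 0") auto
    next
      case 2 then show ?thesis using P1[of a] less.prems by simp
    qed
  next
    case False
    obtain a' b' where ab: "a = 2*a' \<or> a = 2*a'+1" "b = 2*b' \<or> b = 2*b'+1"
      by (metis halves)
    have b1: "b' \<ge> 1" using ab(2) False by auto
    have a1: "a' \<ge> 1" using ab less.prems False by auto
    from ab show ?thesis
    proof (elim disjE)
      assume A: "a = 2*a'" and B: "b = 2*b'"
      have "b' \<le> a'" using A B less.prems by simp
      then have IH: "cmb (a' + b') + g (a' + b') \<le> cmb a' + cmb b' + a'" using less.hyps[of a' b'] A B b1 by simp
      have e: "a + b = 2 * (a' + b')" using A B by simp
      have c1: "cmb (a + b) = 2 * cmb (a' + b')" unfolding e by (rule cmb_even)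
      have c2: "cmb a = 2 * cmb a'" unfolding A by (rule cmb_even)
      have c3: "cmb b = 2 * cmb b'" unfolding B by (rule cmb_even)
      have c4: "g (a + b) = 2 * g (a' + b')" unfolding e by (rule g_even) (use a1 b1 in simp)
      show ?thesis using IH A B c1 c2 c3 c4 by linarith
    next
      assume A: "a = 2*a'+1" and B: "b = 2*b'"
      have le: "b' \<le> a'" using A B less.prems by simp
      have IH1: "cmb (a' + b') + g (a' + b') \<le> cmb a' + cmb b' + a'" using less.hyps[of a' b'] A B b1 le by simp
      have IH2: "cmb (a' + b' + 1) + g (a' + b' + 1) \<le> cmb (a'+1) + cmb b' + (a'+1)" using less.hyps[of "a'+1" b'] A B b1 le by simp
      have e: "a + b = 2 * (a' + b') + 1" using A B by simp
      have c1: "cmb (a + b) = cmb (a'+b') + cmb (a'+b'+1) + 1" unfolding e by (rule cmb_odd) (use a1 in simp)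
      have c2: "cmb a = cmb a' + cmb (a'+1) + 1" unfolding A by (rule cmb_odd) (use a1 in simp)
      have c3: "cmb b = 2 * cmb b'" unfolding B by (rule cmb_even)
      have c4: "g (a + b) = g (a'+b') + g (a'+b'+1)" unfolding e by (rule g_odd) (use a1 b1 in simp)
      show ?thesis using IH1 IH2 A B c1 c2 c3 c4 by linarith
    next
      assume A: "a = 2*a'" and B: "b = 2*b'+1"
      have le: "b' + 1 \<le> a'" using A B less.prems by simp
      have IH1: "cmb (a' + b') + g (a' + b') \<le> cmb a' + cmb b' + a'" using less.hyps[of a' b'] A B b1 le by simp
      have IH2: "cmb (a' + b' + 1) + g (a' + b' + 1) \<le> cmb a' + cmb (b'+1) + a'" using less.hyps[of a' "b'+1"] A B b1 le by simp
      have e: "a + b = 2 * (a' + b') + 1" using A B by simp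
      have c1: "cmb (a + b) = cmb (a'+b') + cmb (a'+b'+1) + 1" unfolding e by (rule cmb_odd) (use a1 in simp)
      have c2: "cmb a = 2 * cmb a'" unfolding A by (rule cmb_even)
      have c3: "cmb b = cmb b' + cmb (b'+1) + 1" unfolding B by (rule cmb_odd) (use b1 in simp)
      have c4: "g (a + b) = g (a'+b') + g (a'+b'+1)" unfolding e by (rule g_odd) (use a1 b1 in simp)
      show ?thesis using IH1 IH2 A B c1 c2 c3 c4 by linarith
    next
      assume A: "a = 2*a'+1" and B: "b = 2*b'+1"
      have le: "b' \<le> a'" using A B less.prems by simp
      have e: "a + b = 2 * (a' + b' + 1)" using A B by simp
      have c1: "cmb (a + b) = 2 * cmb (a'+b'+1)" unfolding e by (rule cmb_even)
      have c2: "cmb a = cmb a' + cmb (a'+1) + 1" unfolding A by (rule cmb_odd) (use a1 in simp)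
      have c3: "cmb b = cmb b' + cmb (b'+1) + 1" unfolding B by (rule cmb_odd) (use b1 in simp)
      have c4: "g (a + b) = 2 * g (a'+b'+1)" unfolding e by (rule g_even) (use a1 b1 in simp)
      have IH1: "cmb (a' + b' + 1) + g (a' + b' + 1) \<le> cmb (a'+1) + cmb b' + (a'+1)" using less.hyps[of "a'+1" b'] A B b1 le by simp
      show ?thesis
      proof (cases "a' = b'")
        case True
        then have "cmb a' = cmb b'" "cmb (a'+1) = cmb (b'+1)" by simp_all
        then show ?thesis using IH1 A B c1 c2 c3 c4 True by linarith
      next
        case False
        with le have le': "b' + 1 \<le> a'" by simp
        have IH2: "cmb (a' + b' + 1) + g (a' + b' + 1) \<le> cmb a' + cmb (b'+1) + a'" using less.hyps[of a' "b'+1"] A B b1 le' by simp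
        show ?thesis using IH1 IH2 A B c1 c2 c3 c4 by linarith
      qed
    qed
  qed
qed


lemma leaves_pos: "leaves t \<ge> 1"
  by (induction t) auto

lemma bal_of_eq: "bal_of l r = (if leaves r \<le> leaves l then leaves l - leaves r else leaves r - leaves l)"
  by (auto simp: bal_of_def)

lemma colless_ge: "cmb (leaves t) \<le> colless t"
proof (induction t)
  case Leaf then show ?case by simp
next
  case (Node l r)
  show ?case
  proof (cases "leaves r \<le> leaves l")
    case True
    then show ?thesis using Q[of "leaves r" "leaves l"] Node by (simp add: bal_of_eq)
  next
    case False
    then show ?thesis using Q[of "leaves l" "leaves r"] Node by (simp add: bal_of_eq add.commute)
  qed
qed

function mbt :: "nat \<Rightarrow> btree" where
  "mbt n = (if n \<le> 1 then Leaf else Node (mbt (n - n div 2)) (mbt (n div 2)))"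
  by auto
termination by (relation "measure id") auto

declare mbt.simps[simp del]

lemma mbt_props: "n \<ge> 1 \<Longrightarrow> leaves (mbt n) = n \<and> colless (mbt n) = cmb n"
proof (induction n rule: less_induct)
  case (less n)
  show ?case
  proof (cases "n \<le> 1")
    case True
    with less.prems have "n = 1" by simp
    then show ?thesis by (simp add: mbt.simps)
  next
    case False
    obtain k where k: "n = 2 * k \<or> n = 2 * k + 1" by (metis halves)
    then show ?thesis
    proof
      assume n: "n = 2 * k"
      with False have k1: "k \<ge> 1" by simp
      have "mbt n = Node (mbt k) (mbt k)" using n False by (subst mbt.simps) simp
      then show ?thesis using less.IH[of k] n k1 by (simp add: bal_of_eq cmb_even)
    next
      assume n: "n = 2 * k + 1"
      with False have k1: "k \<ge> 1" by simp
      have "mbt n = Node (mbt (k+1)) (mbt k)" using n False by (subst mbt.simps) simp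
      then show ?thesis using less.IH[of k] less.IH[of "k+1"] n k1 by (simp add: bal_of_eq cmb_odd')
    qed
  qed
qed

section \<open>GFB\<close>

definition pow2 :: "nat \<Rightarrow> bool" where "pow2 k \<longleftrightarrow> (\<exists>i. k = 2 ^ i)"

definition ginv :: "nat \<Rightarrow> btree multiset \<Rightarrow> bool" where
  "ginv n M \<longleftrightarrow> (\<forall>u\<in>#M. \<forall>w\<in>#M. leaves w \<le> 2 * leaves u)
     \<and> size (filter_mset (\<lambda>t. \<not> pow2 (leaves t)) M) \<le> 1
     \<and> sum_mset (image_mset leaves M) = n"

lemma ginv_init: "ginv n (replicate_mset n Leaf)"
proof -
  have p: "pow2 1" unfolding pow2_def by (rule exI[of _ 0]) simp
  have f: "filter_mset (\<lambda>t. \<not> pow2 (leaves t)) (replicate_mset n Leaf) = {#}"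
    using p by simp
  show ?thesis unfolding ginv_def
  proof (intro conjI)
    show "size (filter_mset (\<lambda>t. \<not> pow2 (leaves t)) (replicate_mset n Leaf)) \<le> 1"
      by (subst f) simp
  qed auto
qed

lemma pow2_double:
  assumes "pow2 x" "pow2 y" "x \<le> y" "y \<le> 2 * x" "\<not> pow2 (x + y)"
  shows "y = 2 * x"
proof -
  obtain i j where x: "x = 2^i" and y: "y = 2^j" using assms(1,2) unfolding pow2_def by blast
  have "i \<noteq> j"
  proof
    assume "i = j"
    then have "x + y = 2 ^ Suc i" using x y by simp
    then show False using assms(5) unfolding pow2_def by blast
  qed
  moreover have "i \<le> j" using assms(3) x y by simp
  ultimately have "i < j" by simp
  moreover have "j \<le> Suc i" using assms(4) x y
    by (metis power_Suc power_le_imp_le_exp one_less_numeral_iff semiring_norm(76))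
  ultimately have "j = Suc i" by simp
  then show ?thesis using x y by simp
qed

lemma ginv_step_aux:
  assumes inv: "ginv n (add_mset u (add_mset v M2))"
    and umin: "\<forall>w\<in># add_mset u (add_mset v M2). leaves u \<le> leaves w"
    and vmin: "\<forall>w\<in># add_mset v M2. leaves v \<le> leaves w"
  shows "ginv n (add_mset (Node u v) M2)"
proof -
  let ?M = "add_mset u (add_mset v M2)"
  let ?P = "\<lambda>t. \<not> pow2 (leaves t)"
  have rat: "\<forall>a\<in>#?M. \<forall>w\<in>#?M. leaves w \<le> 2 * leaves a" using inv unfolding ginv_def by blast
  have cnt: "size (filter_mset ?P ?M) \<le> 1" using inv unfolding ginv_def by blast
  have sm: "sum_mset (image_mset leaves ?M) = n" using inv unfolding ginv_def by blast
  have uv: "leaves u \<le> leaves v" using umin by simp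
  have A: "\<forall>a\<in># add_mset (Node u v) M2. \<forall>w\<in># add_mset (Node u v) M2. leaves w \<le> 2 * leaves a"
  proof (intro ballI)
    fix a w assume a: "a \<in># add_mset (Node u v) M2" and w: "w \<in># add_mset (Node u v) M2"
    have lo: "leaves v \<le> leaves x" if "x \<in># M2" for x using vmin that by simp
    have hi: "leaves x \<le> 2 * leaves u" if "x \<in># M2" for x using rat that by simp
    show "leaves w \<le> 2 * leaves a"
    proof (cases "a = Node u v")
      case True
      then show ?thesis using a w hi[of w] by auto
    next
      case False
      then have aM: "a \<in># M2" using a by simp
      show ?thesis
      proof (cases "w = Node u v")
        case True
        then show ?thesis using lo[OF aM] uv by simp
      next
        case False
        then have "w \<in># M2" using w by simp
        then show ?thesis using rat aM by simp
      qed
    qed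
  qed
  have cM: "size (filter_mset ?P ?M) = (if ?P u then 1 else 0) + (if ?P v then 1 else 0) + size (filter_mset ?P M2)"
    by simp
  have cN: "size (filter_mset ?P (add_mset (Node u v) M2)) = (if ?P (Node u v) then 1 else 0) + size (filter_mset ?P M2)"
    by simp
  have B: "size (filter_mset ?P (add_mset (Node u v) M2)) \<le> 1"
  proof (cases "pow2 (leaves u + leaves v)")
    case True
    then show ?thesis using cnt cM cN by (simp split: if_splits)
  next
    case npow: False
    show ?thesis
    proof (cases "pow2 (leaves u) \<and> pow2 (leaves v)")
      case False
      then show ?thesis using cnt npow cM cN by (auto split: if_splits)
    next
      case True
      have "leaves v \<le> 2 * leaves u" using rat by simp
      then have v2: "leaves v = 2 * leaves u" using pow2_double[of "leaves u" "leaves v"] True uv npow by blast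
      have "filter_mset ?P M2 = {#}"
      proof -
        have "pow2 (leaves x)" if "x \<in># M2" for x
        proof -
          have "leaves v \<le> leaves x" using vmin that by simp
          moreover have "leaves x \<le> 2 * leaves u" using rat that by simp
          ultimately have "leaves x = leaves v" using v2 by simp
          then show ?thesis using True by simp
        qed
        then show ?thesis by simp
      qed
      then have z: "size (filter_mset ?P M2) = 0" by (metis size_empty)
      show ?thesis by (simp only: cN z) simp
    qed
  qed
  have C: "sum_mset (image_mset leaves (add_mset (Node u v) M2)) = n" using sm by simp
  show ?thesis unfolding ginv_def using A B C by blast
qed

lemma ginv_step: "gfb_step M M' \<Longrightarrow> ginv n M \<Longrightarrow> ginv n M'"
proof (induction rule: gfb_step.induct)
  case (1 u M v)
  define M2 where "M2 = M - {#u#} - {#v#}"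
  have e1: "M = add_mset u (M - {#u#})" using 1(1) by simp
  have e2: "M - {#u#} = add_mset v M2" unfolding M2_def by (rule insert_DiffM[OF 1(3), symmetric])
  have eM: "M = add_mset u (add_mset v M2)" using e1 e2 by simp
  have "ginv n (add_mset (Node u v) M2)"
    apply (rule ginv_step_aux)
    using 1 eM e2 by auto
  then show ?case unfolding M2_def by simp
qed

lemma ginv_steps: "gfb_step\<^sup>*\<^sup>* M M' \<Longrightarrow> ginv n M \<Longrightarrow> ginv n M'"
  by (induction rule: rtranclp_induct) (auto intro: ginv_step)

lemma gfb_root:
  assumes "gfb_tree n (Node Ga Gb)"
  shows "leaves Ga \<le> 2 * leaves Gb \<and> leaves Gb \<le> 2 * leaves Ga
    \<and> (pow2 (leaves Ga) \<or> pow2 (leaves Gb)) \<and> leaves Ga + leaves Gb = n"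
proof -
  have r: "gfb_step\<^sup>*\<^sup>* (replicate_mset n Leaf) {#Node Ga Gb#}" using assms unfolding gfb_tree_def .
  then show ?thesis
  proof (cases rule: rtranclp.cases)
    case rtrancl_refl
    have "set_mset {#Node Ga Gb#} = set_mset (replicate_mset n Leaf)"
      using rtrancl_refl by (rule arg_cong)
    then show ?thesis by (simp split: if_splits)
  next
    case (rtrancl_into_rtrancl M)
    have iM: "ginv n M" using ginv_steps[OF rtrancl_into_rtrancl(1) ginv_init] .
    from rtrancl_into_rtrancl(2) show ?thesis
    proof (cases rule: gfb_step.cases)
      case (1 u v)
      obtain M2 where eM: "M = add_mset u (add_mset v M2)"
        using 1(2,4) by (metis insert_DiffM)
      have "{#Node Ga Gb#} = add_mset (Node u v) M2" using 1(1) eM by simp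
      then have "M2 = {#}" "u = Ga" "v = Gb" by auto
      then have "M = {#Ga, Gb#}" using eM by simp
      then show ?thesis using iM unfolding ginv_def by (auto split: if_splits)
    qed
  qed
qed


section \<open>Closed form of g at the relevant points\<close>

lemma g_A: "r \<le> 2^q \<Longrightarrow> g (2^(Suc q) + r) = 2^q"
proof (induction q arbitrary: r)
  case 0
  then have "r = 0 \<or> r = 1" by auto
  then show ?case by auto
next
  case (Suc q)
  have p1: "(1::nat) \<le> 2^q" by simp
  obtain s where "r = 2*s \<or> r = 2*s+1" by (metis halves)
  then show ?case
  proof
    assume r: "r = 2*s"
    have s: "s \<le> 2^q" using Suc.prems r by simp
    have e: "2^(Suc (Suc q)) + r = 2 * (2^(Suc q) + s)" using r by simp
    have "(2::nat) \<le> 2^(Suc q)" by (metis one_le_numeral power_Suc self_le_power zero_less_Suc mult_le_mono2 mult.right_neutral le_trans order_refl one_le_power)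
    then have "g (2 * (2^(Suc q) + s)) = 2 * g (2^(Suc q) + s)" by (intro g_even) (use p1 in linarith)
    then show ?case using e Suc.IH[OF s] by simp
  next
    assume r: "r = 2*s+1"
    have s: "s + 1 \<le> 2^q" using Suc.prems r by simp
    have e: "2^(Suc (Suc q)) + r = 2 * (2^(Suc q) + s) + 1" using r by simp
    have "(2::nat) \<le> 2^(Suc q)" by (metis one_le_numeral power_Suc self_le_power zero_less_Suc mult_le_mono2 mult.right_neutral le_trans order_refl one_le_power)
    then have "g (2 * (2^(Suc q) + s) + 1) = g (2^(Suc q) + s) + g (2^(Suc q) + s + 1)" by (intro g_odd) (use p1 in linarith)
    moreover have "g (2^(Suc q) + s) = 2^q" using Suc.IH[of s] s by simp
    moreover have "g (2^(Suc q) + (s + 1)) = 2^q" using Suc.IH[of "s+1"] s by simp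
    ultimately show ?case using e by simp
  qed
qed

lemma g_B: "2^q \<le> r \<Longrightarrow> r \<le> 2^(Suc q) \<Longrightarrow> g (2^(Suc q) + r) = r"
proof (induction q arbitrary: r)
  case 0
  then have "r = 1 \<or> r = 2" by auto
  moreover have "g 4 = 2" using g_even[of 2] by simp
  ultimately show ?case by auto
next
  case (Suc q)
  have p1: "(1::nat) \<le> 2^q" by simp
  have two: "(2::nat) \<le> 2^(Suc q)" by (metis one_le_numeral power_Suc self_le_power zero_less_Suc mult_le_mono2 mult.right_neutral le_trans order_refl one_le_power)
  obtain s where "r = 2*s \<or> r = 2*s+1" by (metis halves)
  then show ?case
  proof
    assume r: "r = 2*s"
    have s: "2^q \<le> s" "s \<le> 2^(Suc q)" using Suc.prems r by simp_all
    have e: "2^(Suc (Suc q)) + r = 2 * (2^(Suc q) + s)" using r by simp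
    have "g (2 * (2^(Suc q) + s)) = 2 * g (2^(Suc q) + s)" using two by (intro g_even) (use p1 in linarith)
    then show ?case using e Suc.IH[OF s] r by simp
  next
    assume r: "r = 2*s+1"
    have s: "2^q \<le> s" "s + 1 \<le> 2^(Suc q)" using Suc.prems r by simp_all
    have e: "2^(Suc (Suc q)) + r = 2 * (2^(Suc q) + s) + 1" using r by simp
    have "g (2 * (2^(Suc q) + s) + 1) = g (2^(Suc q) + s) + g (2^(Suc q) + s + 1)" using two by (intro g_odd) (use p1 in linarith)
    moreover have "g (2^(Suc q) + s) = s" using Suc.IH s by simp
    moreover have "g (2^(Suc q) + (s + 1)) = s + 1" using Suc.IH[of "s+1"] s by simp
    ultimately show ?case using e r by simp
  qed
qed

lemma gfb_le:
  assumes "y \<le> x" "x \<le> 2 * y" "pow2 x \<or> pow2 y"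
  shows "y \<le> g (x + y)"
  using assms(3)
proof
  assume "pow2 y"
  then obtain q where y: "y = 2^q" unfolding pow2_def by blast
  define r where "r = x - y"
  have r: "r \<le> 2^q" using assms y unfolding r_def by simp
  have e: "x + y = 2^(Suc q) + r" using assms y unfolding r_def by simp
  have "g (x + y) = 2^q" unfolding e by (rule g_A) (rule r)
  then show ?thesis using y by simp
next
  assume "pow2 x"
  then obtain q where x: "x = 2^q" unfolding pow2_def by blast
  show ?thesis
  proof (cases q)
    case 0
    then have "x = 1" "y = 1" using x assms by auto
    then show ?thesis by simp
  next
    case (Suc q')
    have r: "2^q' \<le> y" "y \<le> 2^(Suc q')" using assms x Suc by simp_all
    have e: "x + y = 2^(Suc q') + y" using x Suc by simp
    have "g (x + y) = y" unfolding e by (rule g_B) (rule r(1), rule r(2))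
    then show ?thesis by simp
  qed
qed

theorem corollary2:
  fixes Ta Tb Ga Gb Ma Mb :: btree and n :: nat
  assumes "leaves (Node Ta Tb) = n" and "colless_minimal (Node Ta Tb)"
    and "leaves Ta \<ge> leaves Tb"
    and "gfb_tree n (Node Ga Gb)" and "leaves Ga \<ge> leaves Gb"
    and "leaves (Node Ma Mb) = n" and "max_balanced (Node Ma Mb)"
    and "leaves Ma \<ge> leaves Mb"
  shows "leaves Ga \<ge> leaves Ta \<and> leaves Ta \<ge> leaves Ma \<and>
         leaves Gb \<le> leaves Tb \<and> leaves Tb \<le> leaves Mb"
proof -
  define a where "a = leaves Ta"
  define b where "b = leaves Tb"
  have n: "n = a + b" using assms(1) unfolding a_def b_def by simp
  have ba: "b \<le> a" using assms(3) unfolding a_def b_def by simp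
  have n1: "n \<ge> 1" using leaves_pos[of Ta] n a_def by simp
  have mb: "leaves (mbt n) = n" "colless (mbt n) = cmb n" using mbt_props[OF n1] by simp_all
  have "colless (Node Ta Tb) \<le> colless (mbt n)"
    using assms(2) mb(1) assms(1) unfolding colless_minimal_def by simp
  then have c1: "colless (Node Ta Tb) \<le> cmb n" using mb(2) by simp
  have c2: "colless (Node Ta Tb) = (a - b) + colless Ta + colless Tb"
    using ba unfolding a_def b_def by (simp add: bal_of_eq)
  have c3: "cmb a \<le> colless Ta" "cmb b \<le> colless Tb" using colless_ge a_def b_def by simp_all
  have c4: "cmb n + g n \<le> cmb a + cmb b + a" using P[OF ba] n by simp
  have c5: "a - b + b = a" using ba by simp
  have gb: "g n \<le> b" using c1 c2 c3 c4 c5 by linarith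
  have G: "leaves Ga \<le> 2 * leaves Gb" "leaves Gb \<le> 2 * leaves Ga"
    "pow2 (leaves Ga) \<or> pow2 (leaves Gb)" "leaves Ga + leaves Gb = n"
    using gfb_root[OF assms(4)] by simp_all
  have "leaves Gb \<le> g (leaves Ga + leaves Gb)" using gfb_le[OF assms(5) G(1) G(3)] .
  then have gg: "leaves Gb \<le> b" using G(4) gb by simp
  have M0: "leaves Ma - leaves Mb \<le> 1" using assms(7,8) by (simp add: bal_of_eq)
  have M: "leaves Ma \<le> leaves Mb + 1" "leaves Ma + leaves Mb = n"
    using M0 assms(6) by simp_all
  show ?thesis using gg G(4) M n ba unfolding a_def b_def by linarith
qed

end
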